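(* Let $\mathcal{P}_1\subseteq\mathcal{P}_2\subseteq\mathbb{Z}_{\geq0}$ with $0\in\mathcal{P}_1$ and $\mathcal{P}_1-2\neq\emptyset$. Then $\tau_{\mathcal{P}_1}\geq\tau_{\mathcal{P}_2}$.
   Context: For $\mathcal{P}\subseteq\mathbb{Z}_{\ge0}$, $e_\mathcal{P}(z)=\sum_{n\in\mathcal{P}}z^n/n!$ and $\mathcal{P}-2=\{n-2:n\in\mathcal{P},n\ge2\}$. When $0\in\mathcal{P}$ and $\mathcal{P}-2\ne\emptyset$, $\tau_\mathcal{P}$ denotes the unique $\tau\in\mathbb{R}_{>0}$ with $e_\mathcal{P}(\tau)-\tau e_\mathcal{P}'(\tau)=0$. *)

theory Defs
  imports "HOL-Analysis.Analysis"
begin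

definition eP :: "nat set \<Rightarrow> real \<Rightarrow> real" where
  "eP P z = (\<Sum>n. (if n \<in> P then z ^ n / fact n else 0))"

definition minus2 :: "nat set \<Rightarrow> nat set" where
  "minus2 P = {n - 2 | n. n \<in> P \<and> 2 \<le> n}"

definition tauP :: "nat set \<Rightarrow> real" where
  "tauP P = (THE \<tau>. \<tau> > 0 \<and> eP P \<tau> - \<tau> * deriv (eP P) \<tau> = 0)"

end

theory Submission
  imports Defs
begin

definition cP :: "nat set \<Rightarrow> nat \<Rightarrow> real" where
  "cP P n = (if n \<in> P then 1 / fact n else 0)"

definition aP :: "nat set \<Rightarrow> nat \<Rightarrow> real" where
  "aP P n = (if n \<in> P \<and> 2 \<le> n then (real n - 1) / fact n else 0)"

definition hP :: "nat set \<Rightarrow> real \<Rightarrow> real" where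
  "hP P z = (\<Sum>n. aP P n * z ^ n)"

lemma cP_summable: "summable (\<lambda>n. cP P n * z ^ n)"
proof (rule summable_comparison_test'[OF summable_exp[of "\<bar>z\<bar>"]])
  fix n :: nat assume "n \<ge> 0"
  show "norm (cP P n * z ^ n) \<le> inverse (fact n) * \<bar>z\<bar> ^ n"
    by (auto simp: cP_def abs_mult power_abs field_simps)
qed

lemma eP_eq: "eP P = (\<lambda>z. \<Sum>n. cP P n * z ^ n)"
  unfolding eP_def cP_def by (intro ext suminf_cong) auto

lemma eP_deriv: "deriv (eP P) z = (\<Sum>n. diffs (cP P) n * z ^ n)"
proof -
  have "((\<lambda>z. \<Sum>n. cP P n * z ^ n) has_field_derivative (\<Sum>n. diffs (cP P) n * z ^ n)) (at z)"
    by (rule termdiffs_strong'[where K="norm z + 1"]) (auto intro: cP_summable)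
  then show ?thesis unfolding eP_eq by (rule DERIV_imp_deriv)
qed

lemma hP_sums:
  assumes "0 \<in> P"
  shows "(\<lambda>n. aP P n * z ^ n) sums (1 - (eP P z - z * deriv (eP P) z))"
proof -
  have s1: "(\<lambda>n. cP P n * z ^ n) sums eP P z"
    unfolding eP_eq using cP_summable summable_sums by blast
  have "summable (\<lambda>n. diffs (cP P) n * z ^ n)"
    by (rule termdiff_converges_all) (rule cP_summable)
  from diffs_equiv[OF this]
  have "(\<lambda>n. of_nat n * cP P n * z ^ (n - Suc 0)) sums deriv (eP P) z"
    by (simp add: eP_deriv)
  from sums_mult[OF this, of z]
  have s2: "(\<lambda>n. of_nat n * cP P n * z ^ n) sums (z * deriv (eP P) z)"
  proof (rule back_subst[where P="\<lambda>f. f sums _"], intro ext)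
    fix n show "z * (of_nat n * cP P n * z ^ (n - Suc 0)) = of_nat n * cP P n * z ^ n"
      by (cases n) auto
  qed
  have s3: "(\<lambda>n. if n = 0 then 1 else 0 :: real) sums 1"
    using sums_single[of 0 "\<lambda>_. 1::real"] by simp
  have "(\<lambda>n. (if n = 0 then 1 else 0) - (cP P n * z ^ n - of_nat n * cP P n * z ^ n)) sums (1 - (eP P z - z * deriv (eP P) z))"
    by (intro sums_diff s1 s2 s3)
  moreover have "(\<lambda>n. (if n = 0 then 1 else 0) - (cP P n * z ^ n - of_nat n * cP P n * z ^ n)) = (\<lambda>n. aP P n * z ^ n)"
  proof (intro ext)
    fix n :: nat
    consider "n = 0" | "n = 1" | "n \<ge> 2" by linarith
    then show "(if n = 0 then 1 else 0) - (cP P n * z ^ n - of_nat n * cP P n * z ^ n) = aP P n * z ^ n"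
      by cases (auto simp: cP_def aP_def assms field_simps)
  qed
  ultimately show ?thesis by simp
qed

lemma hP_summable: "0 \<in> P \<Longrightarrow> summable (\<lambda>n. aP P n * z ^ n)"
  using hP_sums sums_summable by blast

lemma hP_eq: "0 \<in> P \<Longrightarrow> eP P z - z * deriv (eP P) z = 1 - hP P z"
  using hP_sums[of P z] unfolding hP_def by (simp add: sums_iff)

lemma aP_nonneg: "aP P n \<ge> 0"
  by (auto simp: aP_def)

lemma hP_strict:
  assumes "0 \<in> P" "m \<in> P" "2 \<le> m" "0 \<le> x" "x < y"
  shows "hP P x < hP P y"
proof -
  have "0 < (\<Sum>n. aP P n * y ^ n - aP P n * x ^ n)"
  proof (rule suminf_pos2[where i=m])
    show "summable (\<lambda>n. aP P n * y ^ n - aP P n * x ^ n)"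
      by (intro summable_diff hP_summable assms)
    fix n
    show "0 \<le> aP P n * y ^ n - aP P n * x ^ n"
      using aP_nonneg[of P n] power_mono[of x y n] assms
      by (simp add: mult_left_mono)
  next
    have "aP P m > 0" using assms by (auto simp: aP_def)
    moreover have "x ^ m < y ^ m" using assms by (intro power_strict_mono) auto
    ultimately show "0 < aP P m * y ^ m - aP P m * x ^ m" by simp
  qed
  also have "\<dots> = hP P y - hP P x"
    unfolding hP_def by (intro suminf_diff[symmetric] hP_summable assms)
  finally show ?thesis by simp
qed

lemma hP_mono_set:
  assumes "P1 \<subseteq> P2" "0 \<in> P1" "0 \<le> z"
  shows "hP P1 z \<le> hP P2 z"
  unfolding hP_def
proof (rule suminf_le)
  show "summable (\<lambda>n. aP P1 n * z ^ n)" by (intro hP_summable assms)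
  show "summable (\<lambda>n. aP P2 n * z ^ n)" using assms by (intro hP_summable) auto
  fix n show "aP P1 n * z ^ n \<le> aP P2 n * z ^ n"
    using assms by (auto simp: aP_def)
qed

lemma hP_cont: "0 \<in> P \<Longrightarrow> isCont (hP P) z"
proof -
  assume P: "0 \<in> P"
  have "((\<lambda>z. \<Sum>n. aP P n * z ^ n) has_field_derivative (\<Sum>n. diffs (aP P) n * z ^ n)) (at z)"
    by (rule termdiffs_strong'[where K="norm z + 1"]) (auto intro: hP_summable P)
  then show ?thesis unfolding hP_def[abs_def] by (rule DERIV_isCont)
qed

lemma tau_prop:
  assumes "0 \<in> P" "m \<in> P" "2 \<le> m"
  shows "tauP P > 0 \<and> hP P (tauP P) = 1"
proof -
  have h0: "hP P 0 = 0" unfolding hP_def by (simp add: aP_def)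
  define Z where "Z = max 1 (1 / aP P m)"
  have am: "aP P m > 0" using assms by (auto simp: aP_def)
  have "1 \<le> aP P m * Z" using am unfolding Z_def
    by (cases "1 \<le> 1 / aP P m") (auto simp: field_simps)
  also have "\<dots> \<le> aP P m * Z ^ m"
  proof -
    have "1 \<le> Z" by (simp add: Z_def)
    then have "Z \<le> Z ^ m" using assms by (intro self_le_power) auto
    then show ?thesis using am by (intro mult_left_mono) auto
  qed
  also have "\<dots> \<le> hP P Z" unfolding hP_def
    using sum_le_suminf[OF hP_summable[OF assms(1), of Z], of "{m}"] aP_nonneg
    by (auto simp: Z_def)
  finally have hZ: "1 \<le> hP P Z" .
  have "\<exists>t. 0 \<le> t \<and> t \<le> Z \<and> hP P t = 1"
    by (rule IVT') (use h0 hZ in \<open>auto simp: Z_def intro!: continuous_at_imp_continuous_on hP_cont assms\<close>)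
  then obtain t where t: "0 \<le> t" "hP P t = 1" by auto
  with h0 have tpos: "t > 0" by (cases "t = 0") auto
  have ex1: "\<exists>!\<tau>. \<tau> > 0 \<and> eP P \<tau> - \<tau> * deriv (eP P) \<tau> = 0"
  proof (rule ex1I[of _ t])
    show "t > 0 \<and> eP P t - t * deriv (eP P) t = 0" using tpos t hP_eq[OF assms(1)] by simp
  next
    fix s assume s: "s > 0 \<and> eP P s - s * deriv (eP P) s = 0"
    then have hs: "hP P s = 1" using hP_eq[OF assms(1)] by simp
    show "s = t"
    proof (rule ccontr)
      assume "s \<noteq> t"
      then consider "s < t" | "t < s" by linarith
      then show False
      proof cases
        case 1 then show False using hP_strict[OF assms, of s t] s t hs by simp
      next
        case 2 then show False using hP_strict[OF assms, of t s] s t hs by simp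
      qed
    qed
  qed
  from theI'[OF ex1] show ?thesis unfolding tauP_def[symmetric]
    using hP_eq[OF assms(1)] by simp
qed

theorem lemma7p4:
  fixes P1 P2 :: "nat set"
  assumes "P1 \<subseteq> P2"
    and "0 \<in> P1"
    and "minus2 P1 \<noteq> {}"
  shows "tauP P1 \<ge> tauP P2"
proof -
  obtain m where m: "m \<in> P1" "2 \<le> m" using assms(3) unfolding minus2_def by auto
  have t1: "tauP P1 > 0" "hP P1 (tauP P1) = 1" using tau_prop[OF assms(2) m] by auto
  have t2: "tauP P2 > 0" "hP P2 (tauP P2) = 1"
    using tau_prop[of P2 m] assms m by auto
  have "hP P2 (tauP P1) \<ge> 1" using hP_mono_set[OF assms(1,2), of "tauP P1"] t1 by simp
  show ?thesis
  proof (rule ccontr)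
    assume "\<not> tauP P2 \<le> tauP P1"
    then have "hP P2 (tauP P1) < hP P2 (tauP P2)"
      using assms m t1 by (intro hP_strict[of P2 m]) auto
    with t2 \<open>hP P2 (tauP P1) \<ge> 1\<close> show False by simp
  qed
qed

end
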